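(* Let $\Gamma_\mu:\mathbb{R}^N_+\to\mathbb{R}^N_+$ be the operator induced by $\Gamma\in(\mathcal{K}_\infty\cup\{0\})^{N\times N}$ and monotone aggregation functions $\mu_1,\dots,\mu_N$, satisfying the small gain condition $\Gamma_\mu(s)\not\ge s$ for all $s\in\mathbb{R}^N_+\setminus\{0\}$, and assume $\Gamma$ has no zero row, i.e. $\Gamma_\mu(e)_i\neq0$ for all $i$. Let $\kappa_0>0$, $\kappa_\Gamma>\kappa_h>0$, let $\phi$ be as in the context and let $c\in\mathbb{R}^N$ with $c\gg0$ and $\|c\|<\kappa_\Gamma/2$. Then there exists $\delta>0$ such that: for every $(N+1)$-simplex $\langle y^1,\dots,y^{N+2}\rangle$ of $\tilde K_1(\delta)$ (so $y^{N+2}=y^1+(\delta,\dots,\delta,1)^\top$), writing $y^j=(v^j,t_j)$, if $v^j\in\mathbb{R}^N_+$ and $\kappa_\Gamma/2\le\|v^j\|<\kappa_\Gamma+\kappa_0$ for $j=1,\dots,N+1$ and $\kappa_\Gamma+\kappa_0\le\|v^{N+2}\|\le\kappa_\Gamma+\kappa_0+\delta$, then the facet $\tau=\langle y^1,\dots,y^{N+1}\rangle$ is not complete. Moreover $\delta$ can be chosen so that in addition $\delta\sqrt N<(\kappa_\Gamma-\kappa_h)/2$, whence every point of $\mathbb{R}^N_+$ at distance less than $\delta\sqrt N$ from a fixed point of $\phi$ has norm less than $\kappa_\Gamma/2$.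
   Context: Order on $\mathbb{R}^N$: $v\ge w$ iff $v_i\ge w_i$ for all $i$; $v>w$ iff $v\ge w$, $v\ne w$; $v\gg w$ iff $v_i>w_i$ for all $i$. $\|\cdot\|$ Euclidean norm, $e=(1,\dots,1)^\top$. $\mathcal{K}_\infty$: continuous, strictly increasing, unbounded $\gamma:\mathbb{R}_+\to\mathbb{R}_+$ with $\gamma(0)=0$; $0$ denotes the zero function. A monotone aggregation function is a continuous $\mu_i:\mathbb{R}^N_+\to\mathbb{R}_+$ with $\mu_i(s)=0$ iff $s=0$, $\mu_i(s)<\mu_i(t)$ whenever $s\ll t$, and $\mu_i(s)\to\infty$ as $\|s\|\to\infty$. The induced operator is $\Gamma_\mu(s)_i=\mu_i(\gamma_{i1}(s_1),\dots,\gamma_{iN}(s_N))$. Given $\kappa_0>0$, $\kappa_\Gamma>\kappa_h>0$, $\phi(v)=\Gamma_\mu(v)\big(1+\min\{0,\frac{\kappa_\Gamma-2\|v\|}{\|v\|+\kappa_0}\}\big)+\max\{0,\kappa_h-2\|v\|\}e$ for $v\in\mathbb{R}^N_+$. Triangulation $\tilde K_1(\delta)$: with $P=\mathrm{diag}(\delta,\dots,\delta,1)$, its $(N+1)$-simplices are $\langle y^1,\dots,y^{N+2}\rangle$ with $y^1=(\delta z,0)$, $z\in\mathbb{Z}^N$, $y^{i+1}=y^i+Pe_{\pi(i)}$ for a permutation $\pi$ of $\{1,\dots,N+1\}$; all vertices lie in $\mathbb{R}^N\times\{0,1\}$ and are componentwise increasing. Its $N$-simplices are the facets of these. Homotopy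 $\vartheta(v,t)=(1-t)c+t\phi(v)$; labeling $l(v,t)=\vartheta(v,t)-v$. Labeling matrix $L(\tau)$ of $\tau=\langle y^1,\dots,y^{N+1}\rangle$: $(N+1)\times(N+1)$ with $j$-th column $(1,l(y^j)^\top)^\top$. $W\succ0$ (lexicographically positive) means the first nonzero entry of each row of $W$ is positive. $\tau$ is complete if $L(\tau)W=I_{N+1}$ has a solution $W\succ0$. *)

theory Defs
  imports "HOL-Analysis.Analysis"
begin

text \<open>Vectors in R^N are rendered as real^'n with 'n a finite linearly ordered index type
  (the linear order fixes the coordinate order 1..N needed for lexicographic positivity).\<close>

definition nonneg :: "real^'n \<Rightarrow> bool" where
  "nonneg v \<longleftrightarrow> (\<forall>i. 0 \<le> v$i)"

definition vge :: "real^'n \<Rightarrow> real^'n \<Rightarrow> bool" where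
  "vge v w \<longleftrightarrow> (\<forall>i. w$i \<le> v$i)"

definition vgg :: "real^'n \<Rightarrow> real^'n \<Rightarrow> bool" where
  "vgg v w \<longleftrightarrow> (\<forall>i. w$i < v$i)"

definition evec :: "real^'n" where
  "evec = (\<chi> i. 1)"

definition class_Kinf :: "(real \<Rightarrow> real) \<Rightarrow> bool" where
  "class_Kinf g \<longleftrightarrow> continuous_on {0..} g \<and> strict_mono_on {0..} g \<and> g 0 = 0
     \<and> (\<forall>M. \<exists>x\<ge>0. g x > M)"

definition zero_fun_on_nonneg :: "(real \<Rightarrow> real) \<Rightarrow> bool" where
  "zero_fun_on_nonneg g \<longleftrightarrow> (\<forall>x\<ge>0. g x = 0)"

definition MAF :: "(real^'n \<Rightarrow> real) \<Rightarrow> bool" where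
  "MAF m \<longleftrightarrow> continuous_on {s. nonneg s} m
     \<and> (\<forall>s. nonneg s \<longrightarrow> 0 \<le> m s)
     \<and> (\<forall>s. nonneg s \<longrightarrow> (m s = 0 \<longleftrightarrow> s = 0))
     \<and> (\<forall>s t. nonneg s \<and> nonneg t \<and> vgg t s \<longrightarrow> m s < m t)
     \<and> (\<forall>M. \<exists>R. \<forall>s. nonneg s \<and> norm s > R \<longrightarrow> m s > M)"

definition Gamma_mu :: "('n \<Rightarrow> real^'n \<Rightarrow> real) \<Rightarrow> ('n \<Rightarrow> 'n \<Rightarrow> real \<Rightarrow> real)
     \<Rightarrow> real^'n \<Rightarrow> real^'n" where
  "Gamma_mu mu gam s = (\<chi> i. mu i (\<chi> j. gam i j (s$j)))"

definition phi :: "('n \<Rightarrow> real^'n \<Rightarrow> real) \<Rightarrow> ('n \<Rightarrow> 'n \<Rightarrow> real \<Rightarrow> real)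
     \<Rightarrow> real \<Rightarrow> real \<Rightarrow> real \<Rightarrow> real^'n \<Rightarrow> real^'n" where
  "phi mu gam k0 kG kh v =
     (1 + min 0 ((kG - 2 * norm v) / (norm v + k0))) *\<^sub>R Gamma_mu mu gam v
     + max 0 (kh - 2 * norm v) *\<^sub>R evec"

definition labl :: "(real^'n \<Rightarrow> real^'n) \<Rightarrow> real^'n \<Rightarrow> real^'n \<Rightarrow> real \<Rightarrow> real^'n" where
  "labl ph c v t = ((1 - t) *\<^sub>R c + t *\<^sub>R ph v) - v"

text \<open>Vertices of the (N+1)-simplex of K1~(delta) given by the base point (delta z, 0) and a
  permutation pi of the N+1 coordinate directions, encoded as a bijection from {0..N}
  onto 'n option (None = the homotopy coordinate t).  Vertex k (0-indexed, k = 0..N+1)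
  is y^(k+1) = y^1 + sum_(m<k) P e_(pi m).\<close>
definition vert_v :: "real \<Rightarrow> ('n \<Rightarrow> int) \<Rightarrow> (nat \<Rightarrow> 'n option) \<Rightarrow> nat \<Rightarrow> real^'n" where
  "vert_v d z p k = (\<chi> i. d * (of_int (z i) + real (card {m. m < k \<and> p m = Some i})))"

definition vert_t :: "(nat \<Rightarrow> 'n option) \<Rightarrow> nat \<Rightarrow> real" where
  "vert_t p k = real (card {m. m < k \<and> p m = None})"

definition is_K1_simplex :: "(nat \<Rightarrow> 'n::finite option) \<Rightarrow> bool" where
  "is_K1_simplex p \<longleftrightarrow> bij_betw p {0..<CARD('n) + 1} (UNIV :: 'n option set)"

text \<open>Order of the rows of the labeling matrix: the row of ones first, then coordinates.\<close>
fun opt_less :: "'n::linorder option \<Rightarrow> 'n option \<Rightarrow> bool" where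
  "opt_less None (Some _) = True"
| "opt_less (Some a) (Some b) = (a < b)"
| "opt_less _ None = False"

definition lex_pos :: "(nat \<Rightarrow> 'n::{finite,linorder} option \<Rightarrow> real) \<Rightarrow> bool" where
  "lex_pos W \<longleftrightarrow> (\<forall>j < CARD('n) + 1. \<exists>c. 0 < W j c \<and> (\<forall>c'. opt_less c' c \<longrightarrow> W j c' = 0))"

definition lab_matrix :: "(real^'n \<Rightarrow> real \<Rightarrow> real^'n) \<Rightarrow> (nat \<Rightarrow> real^'n)
     \<Rightarrow> (nat \<Rightarrow> real) \<Rightarrow> 'n option \<Rightarrow> nat \<Rightarrow> real" where
  "lab_matrix l vs ts r j = (case r of None \<Rightarrow> 1 | Some i \<Rightarrow> l (vs j) (ts j) $ i)"

definition complete :: "('n::{finite,linorder} option \<Rightarrow> nat \<Rightarrow> real) \<Rightarrow> bool" where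
  "complete L \<longleftrightarrow> (\<exists>W. (\<forall>r c. (\<Sum>j<CARD('n) + 1. L r j * W j c) = (if r = c then 1 else 0))
                       \<and> lex_pos W)"

end

theory Submission
  imports Defs
begin

lemma gam_nonneg:
  assumes "class_Kinf g \<or> zero_fun_on_nonneg g" "0 \<le> x"
  shows "0 \<le> g x"
  using assms(1)
proof
  assume k: "class_Kinf g"
  have sm: "strict_mono_on {0..} g" and g0: "g 0 = 0" using k unfolding class_Kinf_def by blast+
  show ?thesis
  proof (cases "x = 0")
    case True then show ?thesis using g0 by simp
  next
    case False
    then have "0 < x" using assms(2) by simp
    then have "g 0 < g x" using strict_mono_onD[OF sm, of 0 x] by simp
    then show ?thesis using g0 by simp
  qed
next
  assume "zero_fun_on_nonneg g" then show ?thesis using assms(2) by (simp add: zero_fun_on_nonneg_def)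
qed

lemma gam_mono:
  assumes "class_Kinf g \<or> zero_fun_on_nonneg g" "0 \<le> x" "x \<le> y"
  shows "g x \<le> g y"
  using assms(1)
proof
  assume k: "class_Kinf g"
  have sm: "strict_mono_on {0..} g" using k unfolding class_Kinf_def by blast
  show ?thesis
  proof (cases "x = y")
    case False
    then have "x < y" using assms(3) by simp
    then have "g x < g y" using strict_mono_onD[OF sm, of x y] assms(2) by simp
    then show ?thesis by simp
  qed simp
next
  assume "zero_fun_on_nonneg g" then show ?thesis using assms by (simp add: zero_fun_on_nonneg_def)
qed

lemma Gamma_nonneg:
  assumes gam_cls: "\<And>i j. class_Kinf (gam i j) \<or> zero_fun_on_nonneg (gam i j)"
    and mu_maf: "\<And>i. MAF (mu i)" and "nonneg v"
  shows "nonneg (Gamma_mu mu gam v)"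
proof -
  have "nonneg (\<chi> j. gam i j (v$j))" for i
    using gam_nonneg[OF gam_cls] assms(3) by (simp add: nonneg_def)
  then show ?thesis using mu_maf unfolding nonneg_def Gamma_mu_def MAF_def
    by (simp add: nonneg_def)
qed

lemma Gamma_bound:
  assumes gam_cls: "\<And>i j. class_Kinf (gam i j) \<or> zero_fun_on_nonneg (gam i j)"
    and mu_maf: "\<And>i. MAF (mu i)" and v: "nonneg v" and R: "norm v \<le> R"
  shows "norm (Gamma_mu mu gam v) \<le> (\<Sum>i\<in>UNIV. mu i (\<chi> j. gam i j R + 1))"
proof -
  have "\<bar>Gamma_mu mu gam v $ i\<bar> \<le> mu i (\<chi> j. gam i j R + 1)" for i
  proof -
    have a: "nonneg (\<chi> j. gam i j (v$j))"
      using gam_nonneg[OF gam_cls] v by (simp add: nonneg_def)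
    have vj: "0 \<le> v$j" "v$j \<le> R" for j
      using v component_le_norm_cart[of v j] R by (auto simp: nonneg_def)
    have a': "nonneg (\<chi> j. gam i j R + 1)"
      using gam_nonneg[OF gam_cls] vj(1)[of undefined] vj(2)[of undefined]
      by (simp add: nonneg_def)
    have lt: "vgg (\<chi> j. gam i j R + 1) (\<chi> j. gam i j (v$j))"
      using gam_mono[OF gam_cls vj] by (simp add: vgg_def) (smt (verit) gam_cls gam_mono vj)
    have "mu i (\<chi> j. gam i j (v$j)) < mu i (\<chi> j. gam i j R + 1)"
      using mu_maf[of i] a a' lt unfolding MAF_def by blast
    moreover have "0 \<le> mu i (\<chi> j. gam i j (v$j))" using mu_maf[of i] a unfolding MAF_def by blast
    ultimately show ?thesis by (simp add: Gamma_mu_def)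
  qed
  then have "(\<Sum>i\<in>UNIV. \<bar>Gamma_mu mu gam v $ i\<bar>) \<le> (\<Sum>i\<in>UNIV. mu i (\<chi> j. gam i j R + 1))"
    by (intro sum_mono) auto
  then show ?thesis using norm_le_l1_cart[of "Gamma_mu mu gam v"] by linarith
qed

lemma norm_mono_nonneg:
  fixes x y :: "real^'n"
  assumes "nonneg x" "\<And>i. x$i \<le> y$i"
  shows "norm x \<le> norm y"
proof -
  have "(\<Sum>i\<in>UNIV. x$i * x$i) \<le> (\<Sum>i\<in>UNIV. y$i * y$i)"
  proof (intro sum_mono)
    fix i
    have "0 \<le> x$i" using assms(1) by (simp add: nonneg_def)
    then show "x$i * x$i \<le> y$i * y$i" using assms(2)[of i] by (intro mult_mono) auto
  qed
  then have "inner x x \<le> inner y y" by (simp add: inner_vec_def)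
  then show ?thesis by (simp add: norm_le)
qed

lemma vert_diff:
  fixes i :: "'n::finite"
  assumes "j \<le> k" "0 \<le> d"
  shows "0 \<le> (vert_v d z p k - vert_v d z p j)$i \<and> (vert_v d z p k - vert_v d z p j)$i \<le> d * real k"
proof -
  have s1: "{m. m < j \<and> p m = Some i} \<subseteq> {m. m < k \<and> p m = Some i}" using assms by auto
  have f: "finite {m. m < k \<and> p m = Some i}" by simp
  have c1: "card {m. m < j \<and> p m = Some i} \<le> card {m. m < k \<and> p m = Some i}"
    using card_mono[OF f s1] .
  have c2: "card {m. m < k \<and> p m = Some i} \<le> k"
    using card_mono[of "{..<k}" "{m. m < k \<and> p m = Some i}"] by auto
  have e: "(vert_v d z p k - vert_v d z p j)$i = d * (real (card {m. m < k \<and> p m = Some i}) - real (card {m. m < j \<and> p m = Some i}))"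
    unfolding vert_v_def vector_minus_component vec_lambda_beta by (simp add: distrib_left right_diff_distrib)
  have r1: "real (card {m. m < j \<and> p m = Some i}) \<le> real (card {m. m < k \<and> p m = Some i})"
    using c1 by simp
  have r2: "real (card {m. m < k \<and> p m = Some i}) \<le> real k" using c2 by simp
  have "d * (real (card {m. m < k \<and> p m = Some i}) - real (card {m. m < j \<and> p m = Some i})) \<le> d * real k"
    using r1 r2 assms(2) by (intro mult_left_mono) auto
  moreover have "0 \<le> d * (real (card {m. m < k \<and> p m = Some i}) - real (card {m. m < j \<and> p m = Some i}))"
    using r1 assms(2) by simp
  ultimately show ?thesis unfolding e by simp
qed

lemma vert_diff_norm:
  fixes z :: "'n::finite \<Rightarrow> int"
  assumes "j \<le> k" "k \<le> M" "0 \<le> d"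
  shows "norm (vert_v d z p k - vert_v d z p j) \<le> real CARD('n) * (d * real M)"
proof -
  have "\<bar>(vert_v d z p k - vert_v d z p j)$i\<bar> \<le> d * real M" for i :: 'n
  proof -
    have "d * real k \<le> d * real M" using assms(2,3) by (intro mult_left_mono) auto
    then show ?thesis using vert_diff[OF assms(1,3), of z p i] by linarith
  qed
  then have "(\<Sum>i\<in>UNIV. \<bar>(vert_v d z p k - vert_v d z p j)$i\<bar>) \<le> (\<Sum>i\<in>(UNIV::'n set). d * real M)"
    by (intro sum_mono) auto
  then show ?thesis using norm_le_l1_cart[of "vert_v d z p k - vert_v d z p j"] by simp
qed

lemma lin4: "(a::real) < kh / 2 \<Longrightarrow> b \<le> a + c \<Longrightarrow> c < x \<Longrightarrow> x < (kG - kh) / 2 \<Longrightarrow> b < kG / 2"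
  by (auto simp: field_simps)

lemma lin2: "0 \<le> (x::real) \<Longrightarrow> 0 < 2 * (x + 1)"
  by (intro mult_pos_pos) auto

lemma fp_small:
  assumes gam_cls: "\<And>i j. class_Kinf (gam i j) \<or> zero_fun_on_nonneg (gam i j)"
    and mu_maf: "\<And>i. MAF (mu i)"
    and small_gain: "\<And>s. nonneg s \<Longrightarrow> s \<noteq> 0 \<Longrightarrow> \<not> vge (Gamma_mu mu gam s) s"
    and kh: "kh > 0" and w: "nonneg w" and fp: "phi mu gam k0 kG kh w = w"
  shows "norm w < kh / 2"
proof (rule ccontr)
  assume "\<not> norm w < kh / 2"
  then have nw: "kh / 2 \<le> norm w" by simp
  then have wne: "w \<noteq> 0" using kh by auto
  define f where "f = 1 + min 0 ((kG - 2 * norm w) / (norm w + k0))"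
  have mx: "max 0 (kh - 2 * norm w) = 0" using nw by simp
  have weq: "w = f *\<^sub>R Gamma_mu mu gam w"
    using fp unfolding phi_def f_def mx by simp
  have Gn: "nonneg (Gamma_mu mu gam w)" using Gamma_nonneg[OF gam_cls mu_maf w] .
  have "min 0 ((kG - 2 * norm w) / (norm w + k0)) \<le> 0" by (rule min.cobounded1)
  then have f1: "f \<le> 1" using f_def by linarith
  show False
  proof (cases "f \<le> 0")
    case True
    have "w $ i = 0" for i
    proof -
      have "w $ i = (f *\<^sub>R Gamma_mu mu gam w) $ i" using arg_cong[where f="\<lambda>v. v $ i", OF weq] by simp
      also have "\<dots> = f * Gamma_mu mu gam w $ i" by simp
      finally have "w $ i = f * Gamma_mu mu gam w $ i" .
      moreover have "0 \<le> Gamma_mu mu gam w $ i" using Gn by (simp add: nonneg_def)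
      ultimately have "w $ i \<le> 0" using True by (simp add: mult_nonpos_nonneg)
      moreover have "0 \<le> w $ i" using w by (simp add: nonneg_def)
      ultimately show ?thesis by simp
    qed
    then have "w = 0" by (simp add: vec_eq_iff)
    then show False using wne by simp
  next
    case False
    have "w $ i \<le> Gamma_mu mu gam w $ i" for i
    proof -
      have "w $ i = (f *\<^sub>R Gamma_mu mu gam w) $ i" using arg_cong[where f="\<lambda>v. v $ i", OF weq] by simp
      also have "\<dots> = f * Gamma_mu mu gam w $ i" by simp
      finally have "w $ i = f * Gamma_mu mu gam w $ i" .
      moreover have "0 \<le> Gamma_mu mu gam w $ i" using Gn by (simp add: nonneg_def)
      ultimately show ?thesis using f1 False by (simp add: mult_left_le_one_le)
    qed
    then have "vge (Gamma_mu mu gam w) w" by (simp add: vge_def)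
    then show False using small_gain[OF w wne] by simp
  qed
qed

lemma phi_bound:
  assumes "kG / 2 \<le> norm v" "norm v < kG + k0" "kG + k0 - e \<le> norm v"
    and "kh < kG" "0 < k0" "norm (Gamma_mu mu gam v) \<le> B"
  shows "norm (phi mu gam k0 kG kh v) \<le> e / k0 * B"
proof -
  let ?n = "norm v"
  have mx: "max 0 (kh - 2 * ?n) = 0" using assms by simp
  have neg: "(kG - 2 * ?n) / (?n + k0) \<le> 0"
    using assms by (intro divide_nonpos_pos) auto
  have mn: "min 0 ((kG - 2 * ?n) / (?n + k0)) = (kG - 2 * ?n) / (?n + k0)" using neg by simp
  define f where "f = (kG + k0 - ?n) / (?n + k0)"
  have fe: "1 + (kG - 2 * ?n) / (?n + k0) = f"
    unfolding f_def using assms by (simp add: field_simps)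
  have ph: "phi mu gam k0 kG kh v = f *\<^sub>R Gamma_mu mu gam v"
    unfolding phi_def mx mn fe by simp
  have f0: "0 \<le> f" unfolding f_def using assms by (intro divide_nonneg_pos) auto
  have "f \<le> (kG + k0 - ?n) / k0" unfolding f_def using assms
    by (intro divide_left_mono) auto
  also have "\<dots> \<le> e / k0" using assms by (intro divide_right_mono) auto
  finally have fle: "f \<le> e / k0" .
  have "norm (phi mu gam k0 kG kh v) = f * norm (Gamma_mu mu gam v)" using ph f0 by simp
  also have "\<dots> \<le> e / k0 * B" using fle f0 assms(6) by (intro mult_mono) auto
  finally show ?thesis .
qed

lemma noncomplete:
  fixes z :: "'n::{finite,linorder} \<Rightarrow> int" and p :: "nat \<Rightarrow> 'n option"
    and c :: "real^('n::{finite,linorder})"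
  assumes kh: "kh > 0" and kGh: "kG > kh" and k0: "k0 > 0"
    and c_norm: "norm c < kG / 2" and dpos: "d > 0"
    and Gb: "\<And>v. nonneg v \<Longrightarrow> norm v \<le> kG + k0 \<Longrightarrow> norm (Gamma_mu mu gam v) \<le> B"
    and Kdef: "K = real CARD('n::{finite,linorder}) * (real CARD('n::{finite,linorder}) + 1)"
    and dK: "K * d + K * d / k0 * B \<le> k0"
    and simp: "is_K1_simplex p"
    and H: "\<forall>j\<le>CARD('n::{finite,linorder}). nonneg (vert_v d z p j)
             \<and> kG / 2 \<le> norm (vert_v d z p j) \<and> norm (vert_v d z p j) < kG + k0"
    and H1: "kG + k0 \<le> norm (vert_v d z p (CARD('n::{finite,linorder}) + 1))"
  shows "\<not> complete (lab_matrix (labl (phi mu gam k0 kG kh) c) (vert_v d z p) (vert_t p))"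
proof
  let ?N = "CARD('n)"
  let ?v = "vert_v d z p" and ?t = "vert_t p"
  let ?ph = "phi mu gam k0 kG kh"
  let ?L = "lab_matrix (labl ?ph c) ?v ?t"
  assume "complete ?L"
  then obtain W where W1: "\<And>r c'. (\<Sum>j<?N + 1. ?L r j * W j c') = (if r = c' then 1 else 0)"
    and lp: "lex_pos W" unfolding complete_def by blast
  define w where "w j = W j None" for j
  have wnn: "0 \<le> w j" if jN: "j < ?N + 1" for j
  proof -
    obtain c0 where c0: "0 < W j c0" "\<And>c'. opt_less c' c0 \<Longrightarrow> W j c' = 0"
      using lp jN unfolding lex_pos_def by blast
    show ?thesis
    proof (cases c0)
      case None then show ?thesis using c0 by (simp add: w_def)
    next
      case (Some a) then show ?thesis using c0(2)[of None] by (simp add: w_def)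
    qed
  qed
  have wsum: "(\<Sum>j<?N + 1. w j) = 1"
    using W1[of None None] by (simp add: lab_matrix_def w_def)
  define l where "l j = labl ?ph c (?v j) (?t j)" for j
  have wl: "(\<Sum>j<?N + 1. w j *\<^sub>R l j) = 0"
  proof (rule iffD2[OF vec_eq_iff], rule allI)
    fix i
    have "(\<Sum>j<?N + 1. l j $ i * w j) = 0"
      using W1[of "Some i" None] by (simp add: lab_matrix_def w_def l_def)
    then show "(\<Sum>j<?N + 1. w j *\<^sub>R l j) $ i = 0 $ i"
      by (simp add: mult.commute)
  qed
  have inj: "inj_on p {0..<?N + 1}" using simp unfolding is_K1_simplex_def by (rule bij_betw_imp_inj_on)
  have t01: "0 \<le> ?t j \<and> ?t j \<le> 1" if "j < ?N + 1" for j
  proof -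
    have "card {m. m < j \<and> p m = None} \<le> Suc 0"
      unfolding card_le_Suc0_iff_eq[OF finite_Collect_conjI[OF disjI1[OF finite_Collect_less_nat]]]
      using inj that unfolding inj_on_def by auto
    then show ?thesis by (simp add: vert_t_def)
  qed
  define K where "K = real ?N * (real ?N + 1)"
  have nj: "kG + k0 - K * d \<le> norm (?v j)" if "j < ?N + 1" for j
  proof -
    have "norm (?v (?N + 1) - ?v j) \<le> real ?N * (d * real (?N + 1))"
      using that dpos by (intro vert_diff_norm) auto
    then have "norm (?v (?N + 1) - ?v j) \<le> K * d" unfolding K_def by (simp add: algebra_simps)
    moreover have "norm (?v (?N + 1)) - norm (?v j) \<le> norm (?v (?N + 1) - ?v j)"
      by (rule norm_triangle_ineq2)
    ultimately show ?thesis using H1 by linarith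
  qed
  have K0: "0 \<le> K * d" unfolding K_def using dpos by simp
  define q where "q j = (1 - ?t j) *\<^sub>R c + ?t j *\<^sub>R ?ph (?v j)" for j
  have qb: "norm (q j) \<le> norm c + K * d / k0 * B" if "j < ?N + 1" for j
  proof -
    have Hj: "nonneg (?v j)" "kG / 2 \<le> norm (?v j)" "norm (?v j) < kG + k0"
      using H that by auto
    have pb: "norm (?ph (?v j)) \<le> K * d / k0 * B"
      using nj[OF that] Hj kGh k0 Gb[OF Hj(1)] by (intro phi_bound) auto
    have "norm (q j) \<le> norm ((1 - ?t j) *\<^sub>R c) + norm (?t j *\<^sub>R ?ph (?v j))"
      unfolding q_def by (rule norm_triangle_ineq)
    also have "\<dots> = (1 - ?t j) * norm c + ?t j * norm (?ph (?v j))"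
      using t01[OF that] by simp
    also have "\<dots> \<le> norm c + norm (?ph (?v j))"
      using t01[OF that] by (smt (verit) mult_left_le_one_le norm_ge_zero)
    finally show ?thesis using pb by linarith
  qed
  define V where "V = (\<Sum>j<?N + 1. w j *\<^sub>R ?v j)"
  define P where "P = (\<Sum>j<?N + 1. w j *\<^sub>R q j)"
  have lq: "l j = q j - ?v j" for j unfolding l_def q_def labl_def by simp
  have PV: "P = V"
  proof -
    have "(\<Sum>j<?N + 1. w j *\<^sub>R l j) = P - V"
      unfolding P_def V_def lq by (simp add: scaleR_diff_right sum_subtractf)
    then show ?thesis using wl by simp
  qed
  have "norm P \<le> (\<Sum>j<?N + 1. norm (w j *\<^sub>R q j))" unfolding P_def by (rule norm_sum)
  also have "\<dots> \<le> (\<Sum>j<?N + 1. w j * (norm c + K * d / k0 * B))"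
  proof (rule sum_mono)
    fix j assume "j \<in> {..<?N + 1}"
    then have j: "j < ?N + 1" by simp
    show "norm (w j *\<^sub>R q j) \<le> w j * (norm c + K * d / k0 * B)"
      using wnn[OF j] qb[OF j] by (simp add: mult_left_mono)
  qed
  also have "\<dots> = norm c + K * d / k0 * B" using wsum by (simp add: sum_distrib_right[symmetric])
  finally have Pb: "norm P \<le> norm c + K * d / k0 * B" .
  have v0: "nonneg (?v 0)" using H by auto
  have Vge: "?v 0 $ i \<le> V $ i" for i
  proof -
    have "V $ i - ?v 0 $ i = (\<Sum>j<?N + 1. w j * (?v j $ i - ?v 0 $ i))"
    proof -
      have "(\<Sum>j<?N + 1. w j * (?v j $ i - ?v 0 $ i)) = (\<Sum>j<?N + 1. w j * ?v j $ i) - (\<Sum>j<?N + 1. w j) * ?v 0 $ i"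
        by (simp only: right_diff_distrib sum_subtractf sum_distrib_right)
      then show ?thesis using wsum by (simp add: V_def)
    qed
    also have "\<dots> \<ge> 0"
    proof (rule sum_nonneg)
      fix j assume "j \<in> {..<?N + 1}"
      then have j: "j < ?N + 1" by simp
      have "0 \<le> (?v j - ?v 0) $ i" using vert_diff[of 0 j d z p i] dpos by simp
      then show "0 \<le> w j * (?v j $ i - ?v 0 $ i)" using wnn[OF j] by simp
    qed
    finally show ?thesis by simp
  qed
  have "norm (?v 0) \<le> norm V" using norm_mono_nonneg[OF v0 Vge] .
  moreover have "kG + k0 - K * d \<le> norm (?v 0)" using nj[of 0] by simp
  ultimately have "kG + k0 - K * d \<le> norm c + K * d / k0 * B" using PV Pb by simp
  moreover have "K * d + K * d / k0 * B \<le> k0" using dK Kdef K_def by simp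
  ultimately show False using c_norm kh kGh by linarith
qed


theorem mainTheorem5:
  fixes mu :: "'n::{finite,linorder} \<Rightarrow> real^('n::{finite,linorder}) \<Rightarrow> real"
    and gam :: "'n \<Rightarrow> 'n \<Rightarrow> real \<Rightarrow> real"
    and k0 kG kh :: real
    and c :: "real^('n::{finite,linorder})"
  assumes gam_cls: "\<And>i j. class_Kinf (gam i j) \<or> zero_fun_on_nonneg (gam i j)"
    and mu_maf: "\<And>i. MAF (mu i)"
    and small_gain: "\<And>s. nonneg s \<Longrightarrow> s \<noteq> 0 \<Longrightarrow> \<not> vge (Gamma_mu mu gam s) s"
    and no_zero_row: "\<And>i. Gamma_mu mu gam evec $ i \<noteq> 0"
    and k0: "k0 > 0" and kh: "kh > 0" and kGh: "kG > kh"
    and c_pos: "vgg c 0" and c_norm: "norm c < kG / 2"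
  shows "\<exists>d>0.
     (\<forall>z p. is_K1_simplex p \<longrightarrow>
        (\<forall>j\<le>CARD('n::{finite,linorder}). nonneg (vert_v d z p j)
             \<and> kG / 2 \<le> norm (vert_v d z p j) \<and> norm (vert_v d z p j) < kG + k0) \<longrightarrow>
        kG + k0 \<le> norm (vert_v d z p (CARD('n::{finite,linorder}) + 1)) \<longrightarrow>
        norm (vert_v d z p (CARD('n::{finite,linorder}) + 1)) \<le> kG + k0 + d \<longrightarrow>
        \<not> complete (lab_matrix (labl (phi mu gam k0 kG kh) c) (vert_v d z p) (vert_t p)))
     \<and> d * sqrt (real CARD('n::{finite,linorder})) < (kG - kh) / 2
     \<and> (\<forall>w v. nonneg w \<and> phi mu gam k0 kG kh w = w \<and> nonneg v
          \<and> dist v w < d * sqrt (real CARD('n::{finite,linorder})) \<longrightarrow> norm v < kG / 2)"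
proof -
  let ?N = "CARD('n::{finite,linorder})"
  define B where "B = (\<Sum>i\<in>UNIV. mu i (\<chi> j. gam i j (kG + k0) + 1))"
  have Gb: "\<And>v. nonneg v \<Longrightarrow> norm v \<le> kG + k0 \<Longrightarrow> norm (Gamma_mu mu gam v) \<le> B"
    unfolding B_def by (rule Gamma_bound[OF gam_cls mu_maf])
  have "norm (Gamma_mu mu gam (0::real^('n::{finite,linorder}))) \<le> B"
    using k0 kh kGh by (intro Gb) (auto simp: nonneg_def)
  then have B0: "0 \<le> B" using norm_ge_zero order_trans by blast
  define K where "K = real ?N * (real ?N + 1)"
  have Npos: "0 < ?N" by simp
  then have K0: "0 < K" unfolding K_def by simp
  define d1 where "d1 = (kG - kh) / (2 * (sqrt (real ?N) + 1))"
  define d2 where "d2 = k0 / (K * (B / k0 + 1))"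
  define d where "d = min d1 d2"
  have "0 \<le> B / k0" using B0 k0 by simp
  then have Bk: "0 < B / k0 + 1" by linarith
  have sq0: "0 \<le> sqrt (real ?N)" by simp
  have sq1: "0 < 2 * (sqrt (real ?N) + 1)" using sq0 by (rule lin2)
  have d1pos: "0 < d1" unfolding d1_def using kGh sq1 by (intro divide_pos_pos) auto
  have d2pos: "0 < d2" unfolding d2_def using k0 K0 Bk by simp
  have dpos: "0 < d" unfolding d_def using d1pos d2pos by simp
  have "d * sqrt (real ?N) \<le> d1 * sqrt (real ?N)" unfolding d_def by (intro mult_right_mono) auto
  also have "\<dots> < d1 * (sqrt (real ?N) + 1)" using d1pos by simp
  also have "\<dots> = (kG - kh) / 2" unfolding d1_def
    using sq1 by (simp add: field_simps)
  finally have dsqrt: "d * sqrt (real ?N) < (kG - kh) / 2" .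
  have "K * d * (B / k0 + 1) \<le> K * d2 * (B / k0 + 1)"
    unfolding d_def using K0 Bk by (intro mult_right_mono mult_left_mono) auto
  also have "\<dots> = k0" unfolding d2_def using K0 Bk by simp
  finally have "K * d * (B / k0 + 1) \<le> k0" .
  then have dK: "K * d + K * d / k0 * B \<le> k0" by (simp add: algebra_simps)
  show ?thesis
  proof (intro exI[of _ d] conjI allI impI dpos dsqrt)
    fix z :: "'n::{finite,linorder} \<Rightarrow> int" and p :: "nat \<Rightarrow> 'n option"
    assume "is_K1_simplex p"
      and "\<forall>j\<le>CARD('n::{finite,linorder}). nonneg (vert_v d z p j)
             \<and> kG / 2 \<le> norm (vert_v d z p j) \<and> norm (vert_v d z p j) < kG + k0"
      and "kG + k0 \<le> norm (vert_v d z p (CARD('n::{finite,linorder}) + 1))"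
    then show "\<not> complete (lab_matrix (labl (phi mu gam k0 kG kh) c) (vert_v d z p) (vert_t p))"
      using noncomplete[OF kh kGh k0 c_norm dpos Gb K_def dK] by blast
  next
    fix w v :: "real^('n::{finite,linorder})"
    assume a: "nonneg w \<and> phi mu gam k0 kG kh w = w \<and> nonneg v
          \<and> dist v w < d * sqrt (real CARD('n::{finite,linorder}))"
    have "norm w < kh / 2" using fp_small[OF gam_cls mu_maf small_gain kh] a by blast
    moreover have "norm v \<le> norm w + dist v w"
      by (metis dist_norm norm_triangle_sub add.commute)
    moreover have "dist v w < d * sqrt (real CARD('n::{finite,linorder}))" using a by blast
    ultimately show "norm v < kG / 2" using dsqrt by (rule lin4)
  qed
qed


end
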